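(* Let $F=\{f_i\}_{i=1}^N$ be a frame for an $n$-dimensional Hilbert space $\mathcal{H}_n$ with frame operator $S_F$, and let $p>1$. Let $L=\max\{\|S_F^{-1/2}f_i\|:1\le i\le N\}$, $I_1=\{i:\|S_F^{-1/2}f_i\|=L\}$, $I_2=\{1,\dots,N\}\setminus I_1$, and $H_j=\mathrm{span}\{f_i:i\in I_j\}$ for $j=1,2$. Suppose (i) $H_1\cap H_2=\{0\}$ and (ii) $\{f_i:i\in I_2\}$ is linearly independent. Then the canonical dual frame $S_F^{-1}F=\{S_F^{-1}f_i\}_{i=1}^N$ is a $1$-erasure spectrally optimal dual frame of $F$, i.e. $S_F^{-1}F\in\zeta_{\mathfrak{R}}^{(1),p}(F)$.
   Context: $S_F f=\sum_i\langle f,f_i\rangle f_i$ is the (positive invertible) frame operator. $G=\{g_i\}$ is a dual of $F$ if $f=\sum_i\langle f,f_i\rangle g_i$ for all $f$. For a dual $G$, $\mathrm{AE}_{\mathfrak{R}}^{(1),p}(F,G)=\{\frac1N\sum_{i=1}^N|\langle f_i,g_i\rangle|^p\}^{1/p}$ (the $\ell^p$-average of the spectral radii of the one-erasure error operators $f\mapsto\langle f,f_i\rangle g_i$), and $\zeta_{\mathfrak{R}}^{(1),p}(F)$ is the set of duals minimizing it over all duals of $F$. *)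

theory Defs
  imports "HOL-Analysis.Analysis"
begin

text \<open>The n-dimensional Hilbert space H_n is modelled as complex^'n with the
standard inner product (linear in the first argument).\<close>

definition cinner :: "complex ^ 'n \<Rightarrow> complex ^ 'n \<Rightarrow> complex" where
  "cinner x y = (\<Sum>j\<in>UNIV. x $ j * cnj (y $ j))"

definition cnorm :: "complex ^ 'n \<Rightarrow> real" where
  "cnorm x = sqrt (Re (cinner x x))"

text \<open>Frame F = (F 0, ..., F (N-1)) with frame bounds 0 < A <= B.\<close>
definition is_frame :: "(nat \<Rightarrow> complex ^ 'n) \<Rightarrow> nat \<Rightarrow> bool" where
  "is_frame F N \<longleftrightarrow> (\<exists>A B. 0 < A \<and> A \<le> B \<and>
     (\<forall>f. A * (cnorm f)^2 \<le> (\<Sum>i<N. (cmod (cinner f (F i)))^2) \<and>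
          (\<Sum>i<N. (cmod (cinner f (F i)))^2) \<le> B * (cnorm f)^2))"

definition frame_op :: "(nat \<Rightarrow> complex ^ 'n) \<Rightarrow> nat \<Rightarrow> complex ^ 'n \<Rightarrow> complex ^ 'n" where
  "frame_op F N f = (\<Sum>i<N. cinner f (F i) *s F i)"

definition is_dual :: "(nat \<Rightarrow> complex ^ 'n) \<Rightarrow> (nat \<Rightarrow> complex ^ 'n) \<Rightarrow> nat \<Rightarrow> bool" where
  "is_dual F G N \<longleftrightarrow> (\<forall>f. f = (\<Sum>i<N. cinner f (F i) *s G i))"

text \<open>Positive (semidefinite) operator and its positive square root.\<close>
definition positive_op :: "(complex ^ 'n \<Rightarrow> complex ^ 'n) \<Rightarrow> bool" where
  "positive_op R \<longleftrightarrow> Vector_Spaces.linear (*s) (*s) R \<and>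
     (\<forall>x. Im (cinner (R x) x) = 0 \<and> Re (cinner (R x) x) \<ge> 0)"

definition op_sqrt :: "(complex ^ 'n \<Rightarrow> complex ^ 'n) \<Rightarrow> (complex ^ 'n \<Rightarrow> complex ^ 'n)" where
  "op_sqrt T = (THE R. positive_op R \<and> R \<circ> R = T)"

text \<open>Canonical dual frame S_F^{-1} F.\<close>
definition canonical_dual :: "(nat \<Rightarrow> complex ^ 'n) \<Rightarrow> nat \<Rightarrow> nat \<Rightarrow> complex ^ 'n" where
  "canonical_dual F N i = inv (frame_op F N) (F i)"

text \<open>AE^{(1),p}_R(F,G): l^p average of spectral radii of the one-erasure
error operators f \<mapsto> <f,f_i> g_i, which equal |<f_i,g_i>|.\<close>
definition AE1 :: "real \<Rightarrow> (nat \<Rightarrow> complex ^ 'n) \<Rightarrow> (nat \<Rightarrow> complex ^ 'n) \<Rightarrow> nat \<Rightarrow> real" where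
  "AE1 p F G N = ((1 / real N) * (\<Sum>i<N. (cmod (cinner (F i) (G i))) powr p)) powr (1 / p)"

definition zeta1 :: "real \<Rightarrow> (nat \<Rightarrow> complex ^ 'n) \<Rightarrow> nat \<Rightarrow> (nat \<Rightarrow> complex ^ 'n) set" where
  "zeta1 p F N = {G. is_dual F G N \<and> (\<forall>G'. is_dual F G' N \<longrightarrow> AE1 p F G N \<le> AE1 p F G' N)}"

end

theory Submission
  imports Defs
begin


lemma cinner_add_left: "cinner (x + y) z = cinner x z + cinner y z"
  unfolding cinner_def by (simp add: distrib_right sum.distrib)
lemma cinner_add_right: "cinner z (x + y) = cinner z x + cinner z y"
  unfolding cinner_def by (simp add: distrib_left sum.distrib)
lemma cinner_diff_left: "cinner (x - y) z = cinner x z - cinner y z"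
  unfolding cinner_def by (simp add: left_diff_distrib sum_subtractf)
lemma cinner_diff_right: "cinner z (x - y) = cinner z x - cinner z y"
  unfolding cinner_def by (simp add: right_diff_distrib sum_subtractf)
lemma cinner_scale_left: "cinner (c *s x) z = c * cinner x z"
  unfolding cinner_def by (simp add: sum_distrib_left mult.assoc)
lemma cinner_scale_right: "cinner z (c *s x) = cnj c * cinner z x"
  unfolding cinner_def by (simp add: sum_distrib_left algebra_simps)
lemma cinner_zero_left[simp]: "cinner 0 z = 0"
  unfolding cinner_def by simp
lemma cinner_zero_right[simp]: "cinner z 0 = 0"
  unfolding cinner_def by simp
lemma cinner_commute: "cinner y x = cnj (cinner x y)"
  unfolding cinner_def by (simp add: mult.commute)
lemma cinner_sum_left: "cinner (\<Sum>i\<in>A. f i) z = (\<Sum>i\<in>A. cinner (f i) z)"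
  by (induction A rule: infinite_finite_induct) (auto simp: cinner_add_left)
lemma cinner_sum_right: "cinner z (\<Sum>i\<in>A. f i) = (\<Sum>i\<in>A. cinner z (f i))"
  by (induction A rule: infinite_finite_induct) (auto simp: cinner_add_right)
lemma cinner_neg_left: "cinner (- x) z = - cinner x z"
  unfolding cinner_def by (simp add: sum_negf)
lemma cinner_self: "cinner x x = complex_of_real ((norm x)^2)"
proof -
  have "cinner x x = (\<Sum>j\<in>UNIV. complex_of_real ((cmod (x $ j))^2))"
    unfolding cinner_def by (intro sum.cong refl) (metis complex_norm_square of_real_power)
  also have "\<dots> = complex_of_real (\<Sum>j\<in>UNIV. (cmod (x $ j))^2)" by simp
  also have "(\<Sum>j\<in>UNIV. (cmod (x $ j))^2) = (norm x)^2"
    unfolding norm_vec_def L2_set_def by (simp add: sum_nonneg)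
  finally show ?thesis .
qed
lemma cinner_self_eq0[simp]: "cinner x x = 0 \<longleftrightarrow> x = 0"
  by (simp add: cinner_self)
lemma cinner_eq0_all: "(\<And>y. cinner y x = 0) \<Longrightarrow> x = 0"
  using cinner_self_eq0 by blast
lemma Re_cinner_self: "Re (cinner x x) = (norm x)^2"
  by (simp add: cinner_self)
lemma Im_cinner_self: "Im (cinner x x) = 0"
  by (simp add: cinner_self)
lemma scaleR_vec_conv: "(r::real) *\<^sub>R (x :: complex ^ 'n) = complex_of_real r *s x"
  by (vector scaleR_conv_of_real)

definition clin :: "(complex ^ 'n \<Rightarrow> complex ^ 'n) \<Rightarrow> bool" where
  "clin T \<longleftrightarrow> (\<forall>x y. T (x + y) = T x + T y) \<and> (\<forall>c x. T (c *s x) = c *s T x)"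

definition sa :: "(complex ^ 'n \<Rightarrow> complex ^ 'n) \<Rightarrow> bool" where
  "sa T \<longleftrightarrow> (\<forall>x y. cinner (T x) y = cinner x (T y))"

lemma clin_vec: "clin T \<longleftrightarrow> Vector_Spaces.linear (*s) (*s) T"
  unfolding clin_def Vector_Spaces.linear_iff using vec.vector_space_axioms by auto

lemma clin_add: "clin T \<Longrightarrow> T (x + y) = T x + T y" by (simp add: clin_def)
lemma clin_scale: "clin T \<Longrightarrow> T (c *s x) = c *s T x" by (simp add: clin_def)
lemma clin_0: "clin T \<Longrightarrow> T 0 = 0" using clin_scale[of T 0 0] by simp
lemma clin_diff: "clin T \<Longrightarrow> T (x - y) = T x - T y"
  using clin_add[of T "x - y" y] by (simp add: algebra_simps)
lemma clin_sum: "clin T \<Longrightarrow> T (\<Sum>i\<in>A. f i) = (\<Sum>i\<in>A. T (f i))"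
  by (induction A rule: infinite_finite_induct) (auto simp: clin_0 clin_add)

lemma real_subspace: "vec.subspace V \<Longrightarrow> subspace (V :: (complex ^ 'n) set)"
  unfolding vec.subspace_def subspace_def by (simp add: scaleR_vec_conv)

lemma clin_real_linear: "clin T \<Longrightarrow> linear T"
  by (rule linearI) (simp_all add: clin_add clin_scale scaleR_vec_conv)

lemma continuous_on_cinner[continuous_intros]:
  "continuous_on S f \<Longrightarrow> continuous_on S g \<Longrightarrow> continuous_on S (\<lambda>x. cinner (f x) (g x))"
  unfolding cinner_def by (intro continuous_intros)

lemma quad_expand:
  assumes "clin T" "sa T"
  shows "Re (cinner (T (x + complex_of_real t *s y)) (x + complex_of_real t *s y)) =
     Re (cinner (T x) x) + 2 * t * Re (cinner (T x) y) + t^2 * Re (cinner (T y) y)"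
proof -
  have s: "cinner (T y) x = cnj (cinner (T x) y)"
    using assms(2) unfolding sa_def by (metis cinner_commute)
  show ?thesis
    using assms(1) by (simp add: clin_add clin_scale cinner_add_left cinner_add_right
        cinner_scale_left cinner_scale_right s power2_eq_square algebra_simps)
qed

lemma quad_scale:
  assumes "clin T"
  shows "Re (cinner (T (complex_of_real r *s y)) (complex_of_real r *s y)) = r^2 * Re (cinner (T y) y)"
  using assms by (simp add: clin_scale cinner_scale_left cinner_scale_right power2_eq_square)

lemma eigen_exists:
  fixes T :: "complex ^ 'n \<Rightarrow> complex ^ 'n"
  assumes lin: "clin T" and sa: "sa T" and sub: "vec.subspace V"
    and inv: "\<forall>x\<in>V. T x \<in> V" and ne: "V \<noteq> {0}"
  shows "\<exists>e\<in>V. cinner e e = 1 \<and> (\<exists>l. T e = l *s e)"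
proof -
  define q where "q x = Re (cinner (T x) x)" for x
  define K where "K = V \<inter> sphere 0 1"
  have rs: "subspace V" using real_subspace[OF sub] .
  have "compact K" unfolding K_def
    by (intro closed_Int_compact closed_subspace rs compact_sphere)
  obtain v where v: "v \<in> V" "v \<noteq> 0" using ne vec.subspace_0[OF sub] by blast
  have "(1 / norm v) *\<^sub>R v \<in> K" unfolding K_def using v rs
    by (simp add: subspace_scale)
  hence Kne: "K \<noteq> {}" by blast
  have "continuous_on K T"
    using clin_real_linear[OF lin] linear_conv_bounded_linear linear_continuous_on by blast
  hence cq: "continuous_on K q" unfolding q_def
    by (intro continuous_intros continuous_on_id)
  obtain x0 where x0: "x0 \<in> K" "\<And>y. y \<in> K \<Longrightarrow> q y \<le> q x0"
    using continuous_attains_sup[OF \<open>compact K\<close> Kne cq] by blast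
  define M where "M = q x0"
  have x0V: "x0 \<in> V" and nx0: "norm x0 = 1" using x0(1) unfolding K_def by auto
  have bound: "q z \<le> M * (norm z)^2" if "z \<in> V" for z
  proof (cases "z = 0")
    case True then show ?thesis using clin_0[OF lin] by (simp add: q_def)
  next
    case False
    define r where "r = 1 / norm z"
    have "r *\<^sub>R z \<in> K" unfolding K_def r_def using that rs False
      by (simp add: subspace_scale)
    hence "q (r *\<^sub>R z) \<le> M" using x0 M_def by blast
    hence "r^2 * q z \<le> M" unfolding q_def scaleR_vec_conv quad_scale[OF lin] .
    hence "r^2 * q z * (norm z)^2 \<le> M * (norm z)^2"
      by (simp add: mult_right_mono)
    moreover have "r^2 * (norm z)^2 = 1" unfolding r_def using False
      by (simp add: power2_eq_square)
    ultimately show ?thesis by (simp add: algebra_simps)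
  qed
  define mu where "mu = cinner (T x0) x0"
  define w where "w = T x0 - mu *s x0"
  have wV: "w \<in> V" unfolding w_def using inv x0V sub
    by (simp add: vec.subspace_diff vec.subspace_scale)
  have x0x0: "cinner x0 x0 = 1" using nx0 by (simp add: cinner_self)
  have wx0: "cinner w x0 = 0" unfolding w_def mu_def
    by (simp add: cinner_diff_left cinner_scale_left x0x0)
  have x0w: "cinner x0 w = 0" using wx0 cinner_commute[of x0 w] by simp
  have Tx0w: "Re (cinner (T x0) w) = (norm w)^2"
  proof -
    have "T x0 = w + mu *s x0" unfolding w_def by simp
    hence "cinner (T x0) w = cinner w w + mu * cinner x0 w"
      by (simp add: cinner_add_left cinner_scale_left)
    thus ?thesis using x0w by (simp add: Re_cinner_self)
  qed
  define s where "s = (norm w)^2"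
  define C where "C = M * s - q w"
  have ineq: "2 * t * s \<le> t^2 * C" for t :: real
  proof -
    let ?z = "x0 + complex_of_real t *s w"
    have zV: "?z \<in> V" using x0V wV sub by (simp add: vec.subspace_add vec.subspace_scale)
    have nz: "(norm ?z)^2 = 1 + t^2 * s"
    proof -
      have "cinner ?z ?z = 1 + complex_of_real (t^2) * cinner w w"
        by (simp add: cinner_add_left cinner_add_right cinner_scale_left cinner_scale_right
            x0x0 wx0 x0w power2_eq_square)
      hence "Re (cinner ?z ?z) = 1 + t^2 * s" unfolding s_def by (simp add: Re_cinner_self)
      thus ?thesis by (simp add: Re_cinner_self)
    qed
    have "q ?z = M + 2 * t * s + t^2 * q w"
      unfolding q_def quad_expand[OF lin sa] M_def Tx0w s_def by simp
    with bound[OF zV] nz show ?thesis unfolding C_def by (simp add: algebra_simps)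
  qed
  have s0: "s = 0"
  proof (rule ccontr)
    assume "s \<noteq> 0"
    hence sp: "s > 0" unfolding s_def by simp
    define t where "t = s / (\<bar>C\<bar> + 1)"
    have tp: "t > 0" unfolding t_def using sp by simp
    have "2 * t * s \<le> t^2 * C" by (rule ineq)
    hence "2 * s \<le> t * C" using tp by (simp add: power2_eq_square mult.assoc)
    also have "t * C \<le> t * \<bar>C\<bar>" using tp by (simp add: mult_left_mono)
    also have "t * \<bar>C\<bar> < s" unfolding t_def using sp
      by (simp add: field_simps)
    finally show False using sp by simp
  qed
  hence "w = 0" unfolding s_def by simp
  hence "T x0 = mu *s x0" unfolding w_def by simp
  thus ?thesis using x0V x0x0 by blast
qed




definition onb_eig :: "(complex ^ 'n \<Rightarrow> complex ^ 'n) \<Rightarrow> (complex ^ 'n) set \<Rightarrow> (complex ^ 'n) set \<Rightarrow> bool" where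
  "onb_eig T V B \<longleftrightarrow> finite B \<and> B \<subseteq> V \<and> (\<forall>e\<in>B. cinner e e = 1 \<and> (\<exists>l. T e = l *s e)) \<and>
     (\<forall>e\<in>B. \<forall>f\<in>B. e \<noteq> f \<longrightarrow> cinner e f = 0) \<and> (\<forall>x\<in>V. x = (\<Sum>e\<in>B. cinner x e *s e))"

lemma onb_eigD:
  assumes "onb_eig T V B"
  shows "finite B" "B \<subseteq> V" "\<And>e. e \<in> B \<Longrightarrow> cinner e e = 1"
    "\<And>e. e \<in> B \<Longrightarrow> \<exists>l. T e = l *s e"
    "\<And>e f. e \<in> B \<Longrightarrow> f \<in> B \<Longrightarrow> e \<noteq> f \<Longrightarrow> cinner e f = 0"
    "\<And>x. x \<in> V \<Longrightarrow> x = (\<Sum>e\<in>B. cinner x e *s e)"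
  using assms unfolding onb_eig_def by auto

lemma cinner_mult_commute: "cinner x y * cinner y x = complex_of_real ((cmod (cinner x y))^2)"
  by (simp add: cinner_commute[of y x] complex_norm_square[symmetric])

lemma spectral_sub:
  fixes T :: "complex ^ 'n \<Rightarrow> complex ^ 'n"
  assumes lin: "clin T" and sa: "sa T"
  shows "vec.subspace V \<Longrightarrow> (\<forall>x\<in>V. T x \<in> V) \<Longrightarrow> \<exists>B. onb_eig T V B"
proof (induction "vec.dim V" arbitrary: V rule: less_induct)
  case less
  show ?case
  proof (cases "V = {0}")
    case True then show ?thesis unfolding onb_eig_def by (intro exI[of _ "{}"]) auto
  next
    case False
    obtain e l where e: "e \<in> V" "cinner e e = 1" "T e = l *s e"
      using eigen_exists[OF lin sa less.prems False] by blast
    define W where "W = {x\<in>V. cinner x e = 0}"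
    have subW: "vec.subspace W" using less.prems(1) unfolding W_def vec.subspace_def
      by (auto simp: cinner_add_left cinner_scale_left)
    have invW: "\<forall>x\<in>W. T x \<in> W"
    proof
      fix x assume x: "x \<in> W"
      have "cinner (T x) e = cinner x (T e)" using sa unfolding sa_def by blast
      also have "\<dots> = 0" using x unfolding W_def e(3) by (simp add: cinner_scale_right)
      finally show "T x \<in> W" using x less.prems(2) unfolding W_def by auto
    qed
    have "e \<notin> W" using e unfolding W_def by auto
    have "W \<subseteq> V" unfolding W_def by auto
    hence "W \<subset> V" using e \<open>e \<notin> W\<close> by blast
    have sW: "vec.span W = W" by (rule vec.span_eq_iff[THEN iffD2, OF subW])
    have sV: "vec.span V = V" by (rule vec.span_eq_iff[THEN iffD2, OF less.prems(1)])
    have "vec.dim W < vec.dim V"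
      using vec.dim_psubset[of W V] \<open>W \<subset> V\<close> unfolding sW sV by simp
    then obtain B' where B': "onb_eig T W B'" using less.hyps subW invW by blast
    have eB': "e \<notin> B'" using onb_eigD(2)[OF B'] \<open>e \<notin> W\<close> by blast
    have B'W: "B' \<subseteq> W" and fB': "finite B'" using onb_eigD(1,2)[OF B'] by auto
    have orth1: "cinner b e = 0" if "b \<in> B'" for b using that B'W unfolding W_def by auto
    have orth2: "cinner e b = 0" if "b \<in> B'" for b using orth1[OF that] cinner_commute[of e b] by simp
    have "onb_eig T V (insert e B')"
      unfolding onb_eig_def
    proof (intro conjI ballI impI)
      show "finite (insert e B')" using fB' by simp
      show "insert e B' \<subseteq> V" using B'W e unfolding W_def by auto
    next
      fix x assume "x \<in> insert e B'"
      thus "cinner x x = 1" using e onb_eigD(3)[OF B'] by auto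
    next
      fix x assume "x \<in> insert e B'"
      thus "\<exists>l. T x = l *s x" using e onb_eigD(4)[OF B'] by auto
    next
      fix x y assume "x \<in> insert e B'" "y \<in> insert e B'" "x \<noteq> y"
      thus "cinner x y = 0" using onb_eigD(5)[OF B'] orth1 orth2 by blast
    next
      fix x assume xV: "x \<in> V"
      define x' where "x' = x - cinner x e *s e"
      have "x' \<in> W" unfolding W_def x'_def using xV e less.prems(1)
        by (simp add: vec.subspace_diff vec.subspace_scale cinner_diff_left cinner_scale_left)
      hence "x' = (\<Sum>b\<in>B'. cinner x' b *s b)" using onb_eigD(6)[OF B'] by blast
      also have "\<dots> = (\<Sum>b\<in>B'. cinner x b *s b)"
        by (intro sum.cong refl) (simp add: x'_def cinner_diff_left cinner_scale_left orth2)
      finally have "x = cinner x e *s e + (\<Sum>b\<in>B'. cinner x b *s b)" unfolding x'_def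
        by (simp add: algebra_simps)
      thus "x = (\<Sum>b\<in>insert e B'. cinner x b *s b)" using fB' eB' by simp
    qed
    thus ?thesis by blast
  qed
qed

lemma spectral:
  fixes T :: "complex ^ 'n \<Rightarrow> complex ^ 'n"
  assumes lin: "clin T" and sa: "sa T"
  shows "\<exists>B. onb_eig T UNIV B"
  using spectral_sub[OF lin sa, of UNIV] by simp

lemma polarization:
  fixes R :: "complex ^ 'n \<Rightarrow> complex ^ 'n"
  assumes lin: "clin R" and im: "\<And>x. Im (cinner (R x) x) = 0"
  shows "sa R"
proof -
  define D where "D x y = cinner (R x) y - cinner x (R y)" for x y
  have D0: "D x x = 0" for x
  proof -
    have "cinner x (R x) = cnj (cinner (R x) x)" by (rule cinner_commute)
    thus ?thesis unfolding D_def using im[of x] by (simp add: complex_eq_iff)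
  qed
  have h1: "D (x + y) (x + y) = D x x + D x y + D y x + D y y" for x y
    unfolding D_def using lin by (simp add: clin_add cinner_add_left cinner_add_right algebra_simps)
  have h2: "D (x + \<i> *s y) (x + \<i> *s y) = D x x - \<i> * D x y + \<i> * D y x + D y y" for x y
    unfolding D_def using lin by (simp add: clin_add clin_scale cinner_add_left cinner_add_right
        cinner_scale_left cinner_scale_right algebra_simps)
  have "D x y = 0" for x y
  proof -
    have a: "D x y + D y x = 0" using h1[of x y] D0 by simp
    have b: "\<i> * (D y x - D x y) = 0" using h2[of x y] D0 by (simp add: algebra_simps)
    hence "D y x = D x y" by simp
    with a show ?thesis by simp
  qed
  thus ?thesis unfolding sa_def D_def by simp
qed

lemma positive_clin: "positive_op R \<Longrightarrow> clin R"
  unfolding positive_op_def clin_vec by simp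

lemma positive_sa: "positive_op R \<Longrightarrow> sa R"
  using polarization positive_clin unfolding positive_op_def by blast

lemma positive_real: "positive_op R \<Longrightarrow> cinner (R x) x = complex_of_real (Re (cinner (R x) x)) \<and> Re (cinner (R x) x) \<ge> 0"
  unfolding positive_op_def by (simp add: complex_eq_iff)

lemma kernel_lemma:
  fixes R :: "complex ^ 'n \<Rightarrow> complex ^ 'n"
  assumes pos: "positive_op R" and mu: "mu \<ge> 0"
    and RR: "R (R e) = complex_of_real (mu^2) *s e"
  shows "R e = complex_of_real mu *s e"
proof (cases "mu = 0")
  case True
  have lin: "clin R" using positive_clin[OF pos] .
  have "R (R e) = 0" using RR True by simp
  have "cinner (R e) (R e) = cinner (R (R e)) e" using positive_sa[OF pos] unfolding sa_def by metis
  also have "\<dots> = 0" using \<open>R (R e) = 0\<close> by simp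
  finally show ?thesis using True by simp
next
  case False
  hence mp: "mu > 0" using mu by simp
  have lin: "clin R" using positive_clin[OF pos] .
  define y where "y = R e - complex_of_real mu *s e"
  have "R y + complex_of_real mu *s y = 0"
    unfolding y_def using lin RR by (simp add: clin_diff clin_scale algebra_simps power2_eq_square)
  hence "Re (cinner (R y + complex_of_real mu *s y) y) = 0" by simp
  hence "Re (cinner (R y) y) + mu * (norm y)^2 = 0"
    by (simp add: cinner_add_left cinner_scale_left cinner_self)
  moreover have "Re (cinner (R y) y) \<ge> 0" using positive_real[OF pos] by blast
  ultimately have "mu * (norm y)^2 = 0" by (smt (verit) mult_nonneg_nonneg mu zero_le_power2)
  hence "y = 0" using mp by simp
  thus ?thesis unfolding y_def by simp
qed

lemma ortho_sum:
  assumes "onb_eig T V B" "f \<in> B"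
  shows "(\<Sum>e\<in>B. c e * cinner e f) = c f"
proof -
  have fin: "finite B" using onb_eigD(1)[OF assms(1)] .
  have "(\<Sum>e\<in>B. c e * cinner e f) = c f * cinner f f + (\<Sum>e\<in>B - {f}. c e * cinner e f)"
    using sum.remove[OF fin assms(2)] by simp
  also have "(\<Sum>e\<in>B - {f}. c e * cinner e f) = 0"
    using onb_eigD(5)[OF assms(1) _ assms(2)] by (intro sum.neutral) auto
  finally show ?thesis using onb_eigD(3)[OF assms] by simp
qed

lemma sqrt_exists_unique:
  fixes T :: "complex ^ 'n \<Rightarrow> complex ^ 'n"
  assumes pos: "positive_op T"
  shows "\<exists>!R. positive_op R \<and> R \<circ> R = T"
proof -
  have lin: "clin T" and saT: "sa T" using positive_clin[OF pos] positive_sa[OF pos] by auto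
  obtain B where B: "onb_eig T UNIV B" using spectral[OF lin saT] by blast
  have fin: "finite B" using onb_eigD(1)[OF B] .
  have expand: "x = (\<Sum>e\<in>B. cinner x e *s e)" for x using onb_eigD(6)[OF B] by simp
  define lam where "lam e = Re (cinner (T e) e)" for e
  define s where "s e = sqrt (lam e)" for e
  have lam0: "lam e \<ge> 0" for e using positive_real[OF pos] unfolding lam_def by blast
  have Te: "T e = complex_of_real (lam e) *s e" if eB: "e \<in> B" for e
  proof -
    obtain l where l: "T e = l *s e" using onb_eigD(4)[OF B eB] by blast
    have ee: "cinner e e = 1" using onb_eigD(3)[OF B eB] .
    have "cinner (T e) e = l" using l ee by (simp add: cinner_scale_left)
    hence "l = complex_of_real (lam e)" using positive_real[OF pos, of e] unfolding lam_def by simp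
    thus ?thesis using l by simp
  qed
  define R0 where "R0 x = (\<Sum>e\<in>B. (complex_of_real (s e) * cinner x e) *s e)" for x
  have R0lin: "clin R0" unfolding clin_def
  proof (intro conjI allI)
    fix x y
    have "R0 (x + y) = (\<Sum>e\<in>B. (complex_of_real (s e) * cinner x e) *s e + (complex_of_real (s e) * cinner y e) *s e)"
      unfolding R0_def by (intro sum.cong refl) (simp add: cinner_add_left distrib_left vec.scale_left_distrib)
    thus "R0 (x + y) = R0 x + R0 y" unfolding R0_def by (simp add: sum.distrib)
  next
    fix c x
    have "R0 (c *s x) = (\<Sum>e\<in>B. c *s ((complex_of_real (s e) * cinner x e) *s e))"
      unfolding R0_def by (intro sum.cong refl) (simp add: cinner_scale_left mult.left_commute)
    thus "R0 (c *s x) = c *s R0 x" unfolding R0_def by (simp add: vec.scale_sum_right)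
  qed
  have R0inner: "cinner (R0 x) f = complex_of_real (s f) * cinner x f" if "f \<in> B" for x f
    unfolding R0_def cinner_sum_left cinner_scale_left using ortho_sum[OF B that] by simp
  have R0pos: "positive_op R0"
  proof -
    have "cinner (R0 x) x = complex_of_real (\<Sum>e\<in>B. s e * (cmod (cinner x e))^2)" for x
    proof -
      have "cinner (R0 x) x = (\<Sum>e\<in>B. (complex_of_real (s e) * cinner x e) * cinner e x)"
        unfolding R0_def cinner_sum_left cinner_scale_left by simp
      also have "\<dots> = (\<Sum>e\<in>B. complex_of_real (s e * (cmod (cinner x e))^2))"
        by (intro sum.cong refl) (simp add: cinner_mult_commute mult.assoc)
      finally show ?thesis by simp
    qed
    moreover have "(\<Sum>e\<in>B. s e * (cmod (cinner x e))^2) \<ge> 0" for x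
      unfolding s_def using lam0 by (intro sum_nonneg) simp
    ultimately show ?thesis unfolding positive_op_def clin_vec[symmetric] using R0lin by simp
  qed
  have R0sq: "R0 \<circ> R0 = T"
  proof
    fix x
    have "(R0 \<circ> R0) x = (\<Sum>e\<in>B. (complex_of_real (s e) * cinner (R0 x) e) *s e)"
      unfolding R0_def by simp
    also have "\<dots> = (\<Sum>e\<in>B. cinner x e *s T e)"
    proof (intro sum.cong refl)
      fix e assume eB: "e \<in> B"
      have ss: "complex_of_real (s e) * complex_of_real (s e) = complex_of_real (lam e)"
      proof -
        have "s e * s e = lam e" unfolding s_def using lam0[of e] by simp
        thus ?thesis by (metis of_real_mult)
      qed
      have "(complex_of_real (s e) * cinner (R0 x) e) = complex_of_real (lam e) * cinner x e"
        unfolding R0inner[OF eB] mult.assoc[symmetric] ss ..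
      thus "(complex_of_real (s e) * cinner (R0 x) e) *s e = cinner x e *s T e"
        unfolding Te[OF eB] by (simp add: mult.commute)
    qed
    also have "\<dots> = T (\<Sum>e\<in>B. cinner x e *s e)" using lin by (simp add: clin_sum clin_scale)
    also have "\<dots> = T x" using expand[of x] by simp
    finally show "(R0 \<circ> R0) x = T x" .
  qed
  have uniq: "R = R0" if R: "positive_op R" "R \<circ> R = T" for R
  proof
    fix x
    have Rlin: "clin R" using positive_clin[OF R(1)] .
    have Re: "R e = complex_of_real (s e) *s e" if "e \<in> B" for e
    proof (rule kernel_lemma[OF R(1)])
      show "s e \<ge> 0" unfolding s_def using lam0 by simp
      have "R (R e) = T e" using R(2) by (metis comp_apply)
      thus "R (R e) = complex_of_real ((s e)^2) *s e" using Te[OF that] lam0 unfolding s_def by simp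
    qed
    have "R x = (\<Sum>e\<in>B. cinner x e *s R e)" using Rlin expand[of x]
      by (metis (no_types, lifting) clin_scale clin_sum sum.cong)
    also have "\<dots> = R0 x" unfolding R0_def by (intro sum.cong refl) (simp add: Re mult.commute)
    finally show "R x = R0 x" .
  qed
  show ?thesis using R0pos R0sq uniq by blast
qed

lemma op_sqrt_props:
  assumes "positive_op T"
  shows "positive_op (op_sqrt T) \<and> op_sqrt T \<circ> op_sqrt T = T"
  unfolding op_sqrt_def using theI'[OF sqrt_exists_unique[OF assms]] .



lemma key_ineq:
  fixes a p :: real and c :: complex
  assumes a: "a \<ge> 0" and p: "p > 1"
  shows "a powr p + p * a powr (p - 1) * (Re c - a) \<le> (cmod c) powr p"
proof (cases "a = 0")
  case True
  then show ?thesis using p by simp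
next
  case False
  hence ap: "a > 0" using a by simp
  have aa: "a powr (p - 1) * a = a powr p"
    using ap by (simp add: powr_diff)
  show ?thesis
  proof (cases "Re c \<le> 0")
    case True
    have "p * a powr (p - 1) * (Re c - a) \<le> p * a powr (p - 1) * (- a)"
      using True p by (intro mult_left_mono) auto
    also have "\<dots> = - p * a powr p" using aa by (simp add: algebra_simps)
    finally have "a powr p + p * a powr (p - 1) * (Re c - a) \<le> (1 - p) * a powr p"
      by (simp add: algebra_simps)
    also have "\<dots> \<le> 0" using p by (simp add: mult_nonpos_nonneg)
    also have "0 \<le> (cmod c) powr p" by simp
    finally show ?thesis .
  next
    case False
    hence t: "Re c > 0" by simp
    have conv: "convex_on {0<..} (\<lambda>x. x powr p)" using powr_convex p by simp
    have "((\<lambda>x. x powr p) has_real_derivative p * a powr (p - 1)) (at a within {0<..})"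
      using has_real_derivative_powr[OF ap] by (rule has_field_derivative_at_within)
    hence "(Re c) powr p - a powr p \<ge> p * a powr (p - 1) * (Re c - a)"
      using convex_on_imp_above_tangent[OF conv, of a "Re c"] ap t
      by (simp add: interior_open)
    moreover have "(Re c) powr p \<le> (cmod c) powr p"
      using t p by (intro powr_mono2) (auto simp: complex_Re_le_cmod)
    ultimately show ?thesis by simp
  qed
qed

lemma cinner_axis_left: "cinner (axis j 1) v = cnj (v $ j)"
proof -
  have "cinner (axis j 1) v = (\<Sum>k\<in>UNIV. if k = j then cnj (v $ k) else 0)"
    unfolding cinner_def by (intro sum.cong) (auto simp: axis_def)
  thus ?thesis by simp
qed

lemma cinner_axis_right: "cinner v (axis j 1) = v $ j"
proof -
  have "cinner v (axis j 1) = (\<Sum>k\<in>UNIV. if k = j then v $ k else 0)"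
    unfolding cinner_def by (intro sum.cong) (auto simp: axis_def)
  thus ?thesis by simp
qed

lemma frame_op_clin: "clin (frame_op F N)"
  unfolding clin_def frame_op_def
  by (simp add: cinner_add_left cinner_scale_left sum.distrib vec.scale_left_distrib
      vec.scale_sum_right)

lemma frame_op_inner: "cinner (frame_op F N x) y = (\<Sum>i<N. cinner x (F i) * cinner (F i) y)"
  unfolding frame_op_def cinner_sum_left cinner_scale_left ..

lemma frame_op_sa: "sa (frame_op F N)"
  unfolding sa_def
proof (intro allI)
  fix x y
  have "cinner x (frame_op F N y) = cnj (cinner (frame_op F N y) x)" by (rule cinner_commute)
  also have "\<dots> = (\<Sum>i<N. cinner x (F i) * cinner (F i) y)"
    unfolding frame_op_inner by (simp add: cinner_commute[of x] cinner_commute[of "F _" y] mult.commute)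
  finally show "cinner (frame_op F N x) y = cinner x (frame_op F N y)"
    unfolding frame_op_inner by simp
qed

lemma frame_op_self: "cinner (frame_op F N x) x = complex_of_real (\<Sum>i<N. (cmod (cinner x (F i)))^2)"
  unfolding frame_op_inner by (simp add: cinner_mult_commute)

lemma cnorm_norm: "cnorm x = norm x"
  unfolding cnorm_def by (simp add: Re_cinner_self)


lemma frame_inverse:
  fixes F :: "nat \<Rightarrow> complex ^ 'n"
  assumes frame: "is_frame F N"
  shows "inv (frame_op F N) (frame_op F N x) = x" "frame_op F N (inv (frame_op F N) y) = y"
    "positive_op (inv (frame_op F N))"
proof -
  let ?S = "frame_op F N"
  obtain A where A: "A > 0" "\<And>f. A * (cnorm f)^2 \<le> (\<Sum>i<N. (cmod (cinner f (F i)))^2)"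
    using frame unfolding is_frame_def by blast
  have lin: "clin ?S" by (rule frame_op_clin)
  have inj: "inj ?S"
  proof (rule injI)
    fix x y assume "?S x = ?S y"
    hence "?S (x - y) = 0" using lin by (simp add: clin_diff)
    hence "Re (cinner (?S (x - y)) (x - y)) = 0" by simp
    hence "(\<Sum>i<N. (cmod (cinner (x - y) (F i)))^2) = 0" unfolding frame_op_self by simp
    hence "A * (cnorm (x - y))^2 \<le> 0" using A(2)[of "x - y"] by simp
    hence "(cnorm (x - y))^2 \<le> 0" using A(1) by (simp add: mult_le_0_iff)
    thus "x = y" unfolding cnorm_norm by simp
  qed
  have surj: "surj ?S"
    using vec.linear_inj_imp_surj[of ?S] lin inj unfolding clin_vec by blast
  show i1: "inv ?S (?S x) = x" for x using inj by (simp add: inv_f_f)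
  show i2: "?S (inv ?S y) = y" for y using surj by (simp add: surj_f_inv_f)
  let ?Si = "inv ?S"
  have linSi: "clin ?Si" unfolding clin_def
  proof (intro conjI allI)
    fix x y
    have "?S (?Si x + ?Si y) = x + y" using lin i2 by (simp add: clin_add)
    hence "?Si (x + y) = ?Si (?S (?Si x + ?Si y))" by simp
    thus "?Si (x + y) = ?Si x + ?Si y" using i1 by simp
  next
    fix c x
    have "?S (c *s ?Si x) = c *s x" using lin i2 by (simp add: clin_scale)
    hence "?Si (c *s x) = ?Si (?S (c *s ?Si x))" by simp
    thus "?Si (c *s x) = c *s ?Si x" using i1 by simp
  qed
  have "cinner (?Si x) x = cinner (?S (?Si x)) (?Si x)" for x
  proof -
    have "cinner (?Si x) x = cinner (?Si x) (?S (?Si x))" using i2 by simp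
    also have "\<dots> = cinner (?S (?Si x)) (?Si x)" using frame_op_sa[of F N] unfolding sa_def by metis
    finally show ?thesis .
  qed
  thus "positive_op ?Si" unfolding positive_op_def using linSi unfolding clin_vec
    by (simp add: frame_op_self sum_nonneg)
qed

lemma indep_coeffs:
  fixes F :: "nat \<Rightarrow> complex ^ 'n"
  assumes inj: "inj_on F I" and ind: "vec.independent (F ` I)" and fin: "finite I"
    and z: "(\<Sum>i\<in>I. c i *s F i) = 0" and i: "i \<in> I"
  shows "c i = 0"
proof -
  define u where "u v = c (the_inv_into I F v)" for v
  have "(\<Sum>v\<in>F ` I. u v *s v) = (\<Sum>i\<in>I. u (F i) *s F i)"
    using sum.reindex[OF inj] by simp
  also have "\<dots> = (\<Sum>i\<in>I. c i *s F i)"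
    unfolding u_def by (intro sum.cong refl) (simp add: the_inv_into_f_f[OF inj])
  finally have "(\<Sum>v\<in>F ` I. u v *s v) = 0" using z by simp
  hence "\<forall>v\<in>F ` I. u v = 0" using ind vec.dependent_finite[of "F ` I"] fin by blast
  hence "u (F i) = 0" using i by blast
  thus ?thesis unfolding u_def using the_inv_into_f_f[OF inj i] by simp
qed

theorem theorem5p5:
  fixes F :: "nat \<Rightarrow> complex ^ 'n" and N :: nat and p L :: real
    and I1 I2 :: "nat set"
  assumes frame: "is_frame F N"
    and p: "p > 1"
    and L_def: "L = Max {cnorm (op_sqrt (inv (frame_op F N)) (F i)) | i. i < N}"
    and I1_def: "I1 = {i. i < N \<and> cnorm (op_sqrt (inv (frame_op F N)) (F i)) = L}"
    and I2_def: "I2 = {..<N} - I1"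
    and disj: "vec.span (F ` I1) \<inter> vec.span (F ` I2) = {0}"
    and indep: "inj_on F I2 \<and> vec.independent (F ` I2)"
  shows "canonical_dual F N \<in> zeta1 p F N"
proof -
  let ?S = "frame_op F N"
  let ?Si = "inv ?S"
  let ?R = "op_sqrt ?Si"
  note fi = frame_inverse[OF frame]
  have linSi: "clin ?Si" using positive_clin[OF fi(3)] .
  have Rprops: "positive_op ?R" "?R \<circ> ?R = ?Si" using op_sqrt_props[OF fi(3)] by auto
  have cd: "canonical_dual F N i = ?Si (F i)" for i unfolding canonical_dual_def ..
  define al where "al i = Re (cinner (?Si (F i)) (F i))" for i
  have al0: "al i \<ge> 0" for i unfolding al_def using positive_real[OF fi(3)] by blast
  have a_eq: "cinner (F i) (?Si (F i)) = complex_of_real (al i)" for i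
  proof -
    have "cinner (?Si (F i)) (F i) = complex_of_real (al i)"
      unfolding al_def using positive_real[OF fi(3)] by blast
    thus ?thesis using cinner_commute[of "F i" "?Si (F i)"] by simp
  qed
  have cn: "cnorm (?R (F i)) = sqrt (al i)" for i
  proof -
    have "cinner (?R (F i)) (?R (F i)) = cinner (?R (?R (F i))) (F i)"
      using positive_sa[OF Rprops(1)] unfolding sa_def by metis
    also have "?R (?R (F i)) = ?Si (F i)" using Rprops(2) by (metis comp_apply)
    finally show ?thesis unfolding cnorm_def al_def by simp
  qed
  have alI1: "al i = L^2" if "i \<in> I1" for i
  proof -
    have "sqrt (al i) = L" using that cn unfolding I1_def by auto
    thus ?thesis using al0[of i] by auto
  qed
  have I1sub: "I1 \<subseteq> {..<N}" unfolding I1_def by auto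
  have split: "{..<N} = I1 \<union> I2" "I1 \<inter> I2 = {}" using I1sub unfolding I2_def by auto
  have finI: "finite I1" "finite I2" using I1sub unfolding I2_def by (auto intro: finite_subset)
  have dual: "is_dual F (canonical_dual F N) N"
    unfolding is_dual_def
  proof
    fix f
    have "(\<Sum>i<N. cinner f (F i) *s canonical_dual F N i) = ?Si (?S f)"
    proof -
      have e: "?S f = (\<Sum>i<N. cinner f (F i) *s F i)" unfolding frame_op_def ..
      show ?thesis unfolding cd e using linSi by (simp add: clin_sum clin_scale)
    qed
    thus "f = (\<Sum>i<N. cinner f (F i) *s canonical_dual F N i)" using fi(1) by simp
  qed
  have minimal: "AE1 p F (canonical_dual F N) N \<le> AE1 p F G N" if G: "is_dual F G N" for G
  proof -
    define h where "h i = G i - ?Si (F i)" for i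
    have hz: "(\<Sum>i<N. cinner x (F i) *s h i) = 0" for x
    proof -
      have "(\<Sum>i<N. cinner x (F i) *s h i) =
          (\<Sum>i<N. cinner x (F i) *s G i) - (\<Sum>i<N. cinner x (F i) *s canonical_dual F N i)"
        unfolding h_def cd by (simp add: vec.scale_right_diff_distrib sum_subtractf)
      also have "\<dots> = x - x" using G dual unfolding is_dual_def by metis
      finally show ?thesis by simp
    qed
    have hI2: "h i = 0" if iI2: "i \<in> I2" for i
    proof (rule cinner_eq0_all)
      fix y
      define c where "c j = cinner y (h j)" for j
      define v where "v = (\<Sum>j<N. c j *s F j)"
      have "cinner x v = 0" for x
      proof -
        have "cinner x v = (\<Sum>j<N. cinner (h j) y * cinner x (F j))"
          unfolding v_def c_def cinner_sum_right cinner_scale_right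
          by (simp add: cinner_commute[of y])
        also have "\<dots> = cinner (\<Sum>j<N. cinner x (F j) *s h j) y"
          unfolding cinner_sum_left cinner_scale_left by (simp add: mult.commute)
        finally show ?thesis using hz by simp
      qed
      hence v0: "v = 0" using cinner_self_eq0 by blast
      define v1 where "v1 = (\<Sum>j\<in>I1. c j *s F j)"
      define v2 where "v2 = (\<Sum>j\<in>I2. c j *s F j)"
      have "v = v1 + v2" unfolding v_def v1_def v2_def split(1)
        using sum.union_disjoint[OF finI split(2)] by simp
      hence v21: "v2 = - v1" using v0 by (simp add: add_eq_0_iff2)
      have "v1 \<in> vec.span (F ` I1)" unfolding v1_def
        by (intro vec.span_sum vec.span_scale vec.span_base) auto
      hence "v2 \<in> vec.span (F ` I1)" unfolding v21 by (rule vec.span_neg)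
      moreover have "v2 \<in> vec.span (F ` I2)" unfolding v2_def
        by (intro vec.span_sum vec.span_scale vec.span_base) auto
      ultimately have "v2 = 0" using disj by blast
      hence "c i = 0" using indep_coeffs[of F I2 c i] indep finI(2) iI2 unfolding v2_def by blast
      thus "cinner y (h i) = 0" unfolding c_def .
    qed
    have trace: "(\<Sum>i<N. cinner (F i) (h i)) = 0"
    proof -
      have col: "(\<Sum>i<N. F i $ j * cnj (h i $ j)) = 0" for j
      proof -
        have "cinner (\<Sum>i<N. cinner (axis j 1) (F i) *s h i) (axis j 1) = 0" unfolding hz by (rule cinner_zero_left)
        hence "(\<Sum>i<N. cinner (axis j 1) (F i) * cinner (h i) (axis j 1)) = 0"
          unfolding cinner_sum_left cinner_scale_left .
        hence "(\<Sum>i<N. cnj (F i $ j) * h i $ j) = 0"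
          unfolding cinner_axis_left cinner_axis_right .
        hence "cnj (\<Sum>i<N. cnj (F i $ j) * h i $ j) = 0" by simp
        thus ?thesis by simp
      qed
      have "(\<Sum>i<N. cinner (F i) (h i)) = (\<Sum>j\<in>UNIV. \<Sum>i<N. F i $ j * cnj (h i $ j))"
        unfolding cinner_def by (rule sum.swap)
      also have "\<dots> = 0" using col by simp
      finally show ?thesis .
    qed
    define d where "d i = cinner (F i) (h i)" for i
    have cG: "cinner (F i) (G i) = complex_of_real (al i) + d i" for i
    proof -
      have "G i = ?Si (F i) + h i" unfolding h_def by simp
      thus ?thesis unfolding d_def using a_eq by (simp add: cinner_add_right)
    qed
    have wsum: "(\<Sum>i<N. al i powr (p - 1) * Re (d i)) = 0"
    proof -
      have "(\<Sum>i<N. al i powr (p - 1) * Re (d i)) =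
          (\<Sum>i\<in>I1. al i powr (p - 1) * Re (d i)) + (\<Sum>i\<in>I2. al i powr (p - 1) * Re (d i))"
        unfolding split(1) using sum.union_disjoint[OF finI split(2)] by simp
      also have "(\<Sum>i\<in>I2. al i powr (p - 1) * Re (d i)) = 0"
        using hI2 unfolding d_def by simp
      also have "(\<Sum>i\<in>I1. al i powr (p - 1) * Re (d i)) = (L^2) powr (p - 1) * Re (\<Sum>i\<in>I1. d i)"
        using alI1 by (simp add: sum_distrib_left Re_sum)
      also have "(\<Sum>i\<in>I1. d i) = (\<Sum>i<N. d i) - (\<Sum>i\<in>I2. d i)"
        unfolding split(1) using sum.union_disjoint[OF finI split(2), of d] by simp
      also have "(\<Sum>i\<in>I2. d i) = 0" using hI2 unfolding d_def by simp
      also have "(\<Sum>i<N. d i) = 0" using trace unfolding d_def .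
      finally show ?thesis by simp
    qed
    have "(\<Sum>i<N. (cmod (cinner (F i) (canonical_dual F N i))) powr p) = (\<Sum>i<N. al i powr p)"
      unfolding cd a_eq using al0 by simp
    also have "\<dots> = (\<Sum>i<N. al i powr p) + p * (\<Sum>i<N. al i powr (p - 1) * Re (d i))"
      using wsum by simp
    also have "\<dots> = (\<Sum>i<N. al i powr p + p * al i powr (p - 1) * (Re (cinner (F i) (G i)) - al i))"
      unfolding cG by (simp add: sum.distrib sum_distrib_left mult.assoc)
    also have "\<dots> \<le> (\<Sum>i<N. (cmod (cinner (F i) (G i))) powr p)"
      by (intro sum_mono key_ineq al0 p)
    finally have le: "(\<Sum>i<N. (cmod (cinner (F i) (canonical_dual F N i))) powr p)
        \<le> (\<Sum>i<N. (cmod (cinner (F i) (G i))) powr p)" .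
    show ?thesis unfolding AE1_def
      using p le by (intro powr_mono2 mult_left_mono mult_nonneg_nonneg sum_nonneg) auto
  qed
  show ?thesis unfolding zeta1_def using dual minimal by blast
qed


end
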